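(* Let $(X,d)$ be a metric space. If $\operatorname{asdim}_{AN}(X,\log(1+d))\le n$, then $(X,d)$ has an $n$-dimensional control function which is a polynomial.
   Context: For $s>0$, an $s$-scale chain between points $x,y$ of a metric space is a finite sequence $x=x_0,\dots,x_m=y$ with $d(x_i,x_{i+1})<s$. The $s$-scale connected components of a subset $U$ are the classes of the relation "joined by an $s$-scale chain inside $U$". A nondecreasing $D\colon\mathbb{R}_+\to\mathbb{R}_+$ is an $n$-dimensional control function of $X$ if for every $s>0$ there is a cover $\{\mathcal U_0,\dots,\mathcal U_n\}$ of $X$ such that the $s$-scale connected components of each $\mathcal U_i$ have diameter at most $D(s)$. $\operatorname{asdim}_{AN}(X,d)\le n$ means $X$ has an $n$-dimensional control function of the form $D(s)=Cs+k$ with constants $C>0$, $k\in\mathbb{R}$. $\log(1+d)$ denotes the metric $(x,y)\mapsto\log(1+d(x,y))$. *)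

theory Defs
  imports "HOL-Analysis.Analysis" "HOL-Computational_Algebra.Polynomial"
begin

definition scale_chain ::
  "('a \<Rightarrow> 'a \<Rightarrow> real) \<Rightarrow> real \<Rightarrow> 'a set \<Rightarrow> 'a \<Rightarrow> 'a \<Rightarrow> bool" where
  "scale_chain d s U x y \<longleftrightarrow>
     (\<exists>xs::'a list. xs \<noteq> [] \<and> hd xs = x \<and> last xs = y \<and> set xs \<subseteq> U \<and>
        (\<forall>i. Suc i < length xs \<longrightarrow> d (xs ! i) (xs ! Suc i) < s))"

definition scale_components ::
  "('a \<Rightarrow> 'a \<Rightarrow> real) \<Rightarrow> real \<Rightarrow> 'a set \<Rightarrow> 'a set set" where
  "scale_components d s U = {{y. scale_chain d s U x y} | x. x \<in> U}"

definition diam_le :: "('a \<Rightarrow> 'a \<Rightarrow> real) \<Rightarrow> 'a set \<Rightarrow> real \<Rightarrow> bool" where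
  "diam_le d C r \<longleftrightarrow> (\<forall>x\<in>C. \<forall>y\<in>C. d x y \<le> r)"

definition control_cover ::
  "'a set \<Rightarrow> ('a \<Rightarrow> 'a \<Rightarrow> real) \<Rightarrow> nat \<Rightarrow> (real \<Rightarrow> real) \<Rightarrow> bool" where
  "control_cover X d n D \<longleftrightarrow>
     (\<forall>s>0. \<exists>U :: nat \<Rightarrow> 'a set. (\<Union>i\<le>n. U i) = X \<and>
        (\<forall>i\<le>n. \<forall>C\<in>scale_components d s (U i). diam_le d C (D s)))"

definition control_function ::
  "'a set \<Rightarrow> ('a \<Rightarrow> 'a \<Rightarrow> real) \<Rightarrow> nat \<Rightarrow> (real \<Rightarrow> real) \<Rightarrow> bool" where
  "control_function X d n D \<longleftrightarrow>
     mono_on {0..} D \<and> (\<forall>s\<ge>0. D s \<ge> 0) \<and> control_cover X d n D"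

text \<open>asdim_AN (X,d) \<le> n: a control function of the form D(s) = C s + k, C > 0, k real.
  (Since k may be negative, the codomain requirement R_+ is not imposed here.)\<close>
definition asdim_AN_le :: "'a set \<Rightarrow> ('a \<Rightarrow> 'a \<Rightarrow> real) \<Rightarrow> nat \<Rightarrow> bool" where
  "asdim_AN_le X d n \<longleftrightarrow>
     (\<exists>C k. C > 0 \<and> control_cover X d n (\<lambda>s. C * s + k))"

end

theory Submission
  imports Defs
begin

lemma chain_eq:
  assumes nn: "\<And>x y. 0 \<le> d x y" and t: "t > 0"
  shows "scale_chain (\<lambda>x y. ln (1 + d x y)) (ln (1 + t)) U = scale_chain d t U"
proof -
  have "\<And>a b. ln (1 + d a b) < ln (1 + t) \<longleftrightarrow> d a b < t"
    using nn t by (simp add: add_pos_nonneg)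
  then show ?thesis unfolding scale_chain_def by (simp add: fun_eq_iff)
qed

theorem corollary2p4:
  fixes X :: "'a set" and d :: "'a \<Rightarrow> 'a \<Rightarrow> real" and n :: nat
  assumes "Metric_space X d"
    and "asdim_AN_le X (\<lambda>x y. ln (1 + d x y)) n"
  shows "\<exists>p :: real poly. control_function X d n (poly p)"
proof -
  have nn: "\<And>x y. 0 \<le> d x y" using Metric_space.nonneg[OF assms(1)] by blast
  obtain C k where C: "C > 0" and cc: "control_cover X (\<lambda>x y. ln (1 + d x y)) n (\<lambda>s. C * s + k)"
    using assms(2) unfolding asdim_AN_le_def by blast
  define N where "N = nat \<lceil>C\<rceil>"
  have CN: "C \<le> real N" unfolding N_def by linarith
  define p where "p = smult (exp k) ([:1,1:] ^ N)"
  have pp: "poly p t = exp k * (1 + t) ^ N" for t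
    unfolding p_def by (simp add: algebra_simps)
  have mono: "mono_on {0..} (poly p)"
    by (rule mono_onI) (simp add: pp power_mono)
  have pos: "\<forall>s\<ge>0. poly p s \<ge> 0" by (simp add: pp)
  have cov: "control_cover X d n (poly p)"
    unfolding control_cover_def
  proof (intro allI impI)
    fix t :: real assume t: "t > 0"
    have s: "ln (1 + t) > 0" using t by simp
    obtain U where U: "(\<Union>i\<le>n. U i) = X"
      and UC: "\<forall>i\<le>n. \<forall>Cc\<in>scale_components (\<lambda>x y. ln (1 + d x y)) (ln (1+t)) (U i).
                diam_le (\<lambda>x y. ln (1 + d x y)) Cc (C * ln (1+t) + k)"
      using cc s unfolding control_cover_def by blast
    have key: "d x y \<le> poly p t" if h: "ln (1 + d x y) \<le> C * ln (1+t) + k" for x y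
    proof -
      have "1 + d x y = exp (ln (1 + d x y))" using nn[of x y] by simp
      also have "\<dots> \<le> exp (C * ln (1+t) + k)" using h by simp
      also have "\<dots> = exp k * (1 + t) powr C"
        using t by (simp add: powr_def exp_add mult.commute)
      also have "\<dots> \<le> exp k * (1 + t) powr (real N)"
        using t CN by (intro mult_left_mono powr_mono) auto
      also have "\<dots> = exp k * (1 + t) ^ N"
        using t by (simp add: powr_realpow)
      finally show ?thesis unfolding pp by simp
    qed
    show "\<exists>U. (\<Union>i\<le>n. U i) = X \<and> (\<forall>i\<le>n. \<forall>Cc\<in>scale_components d t (U i). diam_le d Cc (poly p t))"
    proof (intro exI conjI allI impI ballI)
      show "(\<Union>i\<le>n. U i) = X" by (rule U)
    next
      fix i Cc assume i: "i \<le> n" and Cc: "Cc \<in> scale_components d t (U i)"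
      have "Cc \<in> scale_components (\<lambda>x y. ln (1 + d x y)) (ln (1+t)) (U i)"
        using Cc unfolding scale_components_def chain_eq[OF nn t] .
      then have "diam_le (\<lambda>x y. ln (1 + d x y)) Cc (C * ln (1+t) + k)" using UC i by blast
      then show "diam_le d Cc (poly p t)" unfolding diam_le_def using key by blast
    qed
  qed
  show ?thesis unfolding control_function_def using mono pos cov by blast
qed

end
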